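(* Let $p_x$ be given, $\beta\in\mathbb{R}$, and let $G(p_{z|x}):=(\beta-1)H(Z)+H(Z|X)$, where $p_z=Q_xp_{z|x}$. If $p_{z|x}$ ranges over $\varepsilon_{z|x}$-infimal conditional pmf vectors, then $G$ is $\sigma_G$-weakly convex with respect to $p_{z|x}$ on this set, where $$\sigma_G:=\max\Big\{\frac{2|\beta-1|N_z}{\varepsilon_{z|x}},\ \frac{2N_zN_x}{\varepsilon_{z|x}}\Big\}.$$
   Context: Finite alphabets $\mathcal{X},\mathcal{Z}$ with $N_x,N_z$ elements, $p(x)>0$ given. $p_{z|x}=(p(z_1|x_1),\dots,p(z_1|x_{N_x}),p(z_2|x_1),\dots,p(z_{N_z}|x_{N_x}))^T$ with $\sum_zp(z|x)=1$ for each $x$; $Q_x:=I_{N_z}\otimes p_x^T$ so that $p_z=Q_xp_{z|x}$ is the marginal $p(z)=\sum_xp(z|x)p(x)$. $H(Z)=-\sum_zp(z)\log p(z)$, $H(Z|X)=-\sum_xp(x)\sum_zp(z|x)\log p(z|x)$. A conditional pmf vector is $\varepsilon$-infimal if its smallest entry equals $\varepsilon>0$ (all entries are $\ge\varepsilon$). $f$ is $\sigma$-weakly convex on a set $S$ if $f(y)\ge f(x)+\langle\nabla f(x),y-x\rangle-\frac\sigma2\|y-x\|^2$ for all $x,y\in S$ (Euclidean norm). *)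

theory Defs
  imports "HOL-Analysis.Analysis"
begin

definition cond_pmf :: "real ^ ('z::finite \<times> 'x::finite) \<Rightarrow> bool" where
  "cond_pmf q \<longleftrightarrow> (\<forall>i. q $ i \<ge> 0) \<and> (\<forall>x. (\<Sum>z\<in>UNIV. q $ (z, x)) = 1)"

definition infimal :: "real \<Rightarrow> real ^ ('z::finite \<times> 'x::finite) \<Rightarrow> bool" where
  "infimal \<epsilon> q \<longleftrightarrow> cond_pmf q \<and> Min (range (\<lambda>i. q $ i)) = \<epsilon>"

definition marg :: "('x::finite \<Rightarrow> real) \<Rightarrow> real ^ ('z::finite \<times> 'x) \<Rightarrow> 'z \<Rightarrow> real" where
  "marg px q z = (\<Sum>x\<in>UNIV. q $ (z, x) * px x)"

definition entZ :: "('x::finite \<Rightarrow> real) \<Rightarrow> real ^ ('z::finite \<times> 'x) \<Rightarrow> real" where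
  "entZ px q = - (\<Sum>z\<in>UNIV. marg px q z * ln (marg px q z))"

definition entZX :: "('x::finite \<Rightarrow> real) \<Rightarrow> real ^ ('z::finite \<times> 'x) \<Rightarrow> real" where
  "entZX px q = - (\<Sum>x\<in>UNIV. px x * (\<Sum>z\<in>UNIV. q $ (z, x) * ln (q $ (z, x))))"

definition weakly_convex_on :: "'a::real_inner set \<Rightarrow> ('a \<Rightarrow> real) \<Rightarrow> real \<Rightarrow> bool" where
  "weakly_convex_on S f \<sigma> \<longleftrightarrow>
     (\<forall>x\<in>S. \<exists>D. (GDERIV f x :> D) \<and>
        (\<forall>y\<in>S. f y \<ge> f x + inner D (y - x) - \<sigma> / 2 * (norm (y - x))\<^sup>2))"

end

theory Submission
  imports Defs
begin

definition Breg :: "real \<Rightarrow> real \<Rightarrow> real" where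
  "Breg a b = b * ln b - a * ln a - (ln a + 1) * (b - a)"

lemma Breg_bounds:
  assumes "a \<ge> e" "b \<ge> e" "e > 0"
  shows "0 \<le> Breg a b" "Breg a b \<le> (b - a)\<^sup>2 / e"
proof -
  have a: "a > 0" and b: "b > 0" using assms by auto
  have eq: "Breg a b = b * ln (b / a) - (b - a)"
    using a b by (simp add: Breg_def ln_div algebra_simps)
  have l1: "ln (b / a) \<le> b / a - 1" using a b by (intro ln_le_minus_one) simp
  have l2: "ln (b / a) \<ge> 1 - a / b"
  proof -
    have "ln (a / b) \<le> a / b - 1" using a b by (intro ln_le_minus_one) simp
    moreover have "ln (a / b) = - ln (b / a)" using a b by (simp add: ln_div)
    ultimately show ?thesis by simp
  qed
  have "b * ln (b / a) \<ge> b * (1 - a / b)" using l2 b by (intro mult_left_mono) auto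
  also have "b * (1 - a / b) = b - a" using b by (simp add: field_simps)
  finally show "0 \<le> Breg a b" using eq by simp
  have "b * ln (b / a) \<le> b * (b / a - 1)" using l1 b by (intro mult_left_mono) auto
  hence "Breg a b \<le> b * (b / a - 1) - (b - a)" using eq by simp
  also have "\<dots> = (b - a)\<^sup>2 / a" using a by (simp add: field_simps power2_eq_square)
  also have "\<dots> \<le> (b - a)\<^sup>2 / e" using assms by (intro divide_left_mono) auto
  finally show "Breg a b \<le> (b - a)\<^sup>2 / e" .
qed

lemma weighted_sq:
  fixes w d :: "'a \<Rightarrow> real"
  assumes "finite A" "\<forall>i\<in>A. w i \<ge> 0" "sum w A = 1"
  shows "(\<Sum>i\<in>A. w i * d i)\<^sup>2 \<le> (\<Sum>i\<in>A. w i * (d i)\<^sup>2)"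
proof -
  define a where "a = (\<Sum>i\<in>A. w i * d i)"
  have "0 \<le> (\<Sum>i\<in>A. w i * (d i - a)\<^sup>2)" using assms by (intro sum_nonneg) auto
  also have "\<dots> = (\<Sum>i\<in>A. w i * (d i)\<^sup>2) - 2 * a * (\<Sum>i\<in>A. w i * d i) + a\<^sup>2 * sum w A"
    by (simp add: power2_eq_square algebra_simps sum.distrib sum_subtractf sum_distrib_left sum_distrib_right)
  also have "\<dots> = (\<Sum>i\<in>A. w i * (d i)\<^sup>2) - a\<^sup>2" using assms by (simp add: a_def power2_eq_square)
  finally show ?thesis by (simp add: a_def)
qed

lemma vec_nth_deriv[derivative_intros]:
  "((\<lambda>q. q $ i) has_derivative (\<lambda>h. h $ i)) F"
  by (rule bounded_linear_imp_has_derivative[OF bounded_linear_vec_nth])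

lemma marg_deriv[derivative_intros]:
  "((\<lambda>q. marg px q z) has_derivative (\<lambda>h. marg px h z)) F"
  unfolding marg_def by (auto intro!: derivative_eq_intros)

lemma marg_diff: "marg px (q - p) z = marg px q z - marg px p z"
  unfolding marg_def by (simp add: algebra_simps sum_subtractf)

lemma sum_pairs:
  fixes g :: "'z::finite \<times> 'x::finite \<Rightarrow> real"
  shows "(\<Sum>i\<in>UNIV. g i) = (\<Sum>z\<in>UNIV. \<Sum>x\<in>UNIV. g (z, x))"
  by (simp add: sum.cartesian_product)

definition Lf :: "real \<Rightarrow> ('x::finite \<Rightarrow> real) \<Rightarrow> real ^ ('z::finite \<times> 'x) \<Rightarrow> real ^ ('z \<times> 'x) \<Rightarrow> real" where
  "Lf \<beta> px p h = (\<beta> - 1) * (- (\<Sum>z\<in>UNIV. (ln (marg px p z) + 1) * marg px h z))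
     + (- (\<Sum>x\<in>UNIV. px x * (\<Sum>z\<in>UNIV. (ln (p $ (z, x)) + 1) * h $ (z, x))))"

definition Dv :: "real \<Rightarrow> ('x::finite \<Rightarrow> real) \<Rightarrow> real ^ ('z::finite \<times> 'x) \<Rightarrow> real ^ ('z \<times> 'x)" where
  "Dv \<beta> px p = (\<chi> i. (\<beta> - 1) * (- ((ln (marg px p (fst i)) + 1) * px (snd i)))
      + (- (px (snd i) * (ln (p $ i) + 1))))"

lemma sum_lin2:
  "(\<Sum>z\<in>(A::'a set). \<Sum>x\<in>(B::'b set). (c::real) * - (Y z x) + - W z x) = c * - (\<Sum>z\<in>A. \<Sum>x\<in>B. Y z x) + - (\<Sum>z\<in>A. \<Sum>x\<in>B. W z x)"
  by (simp add: sum_subtractf sum_distrib_left sum_negf)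

lemma inner_Dv: "inner h (Dv \<beta> px p) = Lf \<beta> px p h"
proof -
  have "inner h (Dv \<beta> px p) = (\<Sum>z\<in>UNIV. \<Sum>x\<in>UNIV. h $ (z, x) * Dv \<beta> px p $ (z, x))"
    unfolding inner_vec_def by (simp add: sum_pairs)
  also have "\<dots> = (\<Sum>z\<in>UNIV. \<Sum>x\<in>UNIV. (\<beta> - 1) * (- ((ln (marg px p z) + 1) * (h $ (z, x) * px x)))
     + (- (px x * ((ln (p $ (z, x)) + 1) * h $ (z, x)))))"
    by (intro sum.cong refl) (simp add: Dv_def algebra_simps)
  also have "\<dots> = (\<beta> - 1) * (- (\<Sum>z\<in>UNIV. \<Sum>x\<in>UNIV. (ln (marg px p z) + 1) * (h $ (z, x) * px x)))
     + (- (\<Sum>z\<in>UNIV. \<Sum>x\<in>UNIV. px x * ((ln (p $ (z, x)) + 1) * h $ (z, x))))"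
    by (rule sum_lin2)
  also have "\<dots> = Lf \<beta> px p h"
  proof -
    have 1: "(\<Sum>z\<in>UNIV. \<Sum>x\<in>UNIV. (ln (marg px p z) + 1) * (h $ (z, x) * px x))
        = (\<Sum>z\<in>UNIV. (ln (marg px p z) + 1) * marg px h z)"
      unfolding marg_def by (simp add: sum_distrib_left)
    have 2: "(\<Sum>z\<in>UNIV. \<Sum>x\<in>UNIV. px x * ((ln (p $ (z, x)) + 1) * h $ (z, x)))
        = (\<Sum>x\<in>UNIV. \<Sum>z\<in>UNIV. px x * ((ln (p $ (z, x)) + 1) * h $ (z, x)))"
      by (rule sum.swap)
    show ?thesis unfolding Lf_def 1 2 by (simp add: sum_distrib_left)
  qed
  finally show ?thesis .
qed

lemma xlnx_deriv:
  fixes g :: "'a::real_normed_vector \<Rightarrow> real"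
  assumes "(g has_derivative g') (at p)" "g p > 0"
  shows "((\<lambda>q. g q * ln (g q)) has_derivative (\<lambda>h. (ln (g p) + 1) * g' h)) (at p)"
proof -
  have "((\<lambda>q. g q * ln (g q)) has_derivative (\<lambda>h. g p * (g' h * inverse (g p)) + g' h * ln (g p))) (at p)"
    by (rule has_derivative_mult[OF assms(1) has_derivative_ln[OF assms(2) assms(1)]])
  moreover have "(\<lambda>h. g p * (g' h * inverse (g p)) + g' h * ln (g p)) = (\<lambda>h. (ln (g p) + 1) * g' h)"
    using assms(2) by (auto simp: field_simps)
  ultimately show ?thesis by simp
qed

lemma f_deriv:
  assumes "\<forall>i. p $ i > 0" "\<forall>z. marg px p z > 0"
  shows "((\<lambda>q. (\<beta> - 1) * entZ px q + entZX px q) has_derivative Lf \<beta> px p) (at p)"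
proof -
  have a: "((\<lambda>q. \<Sum>z\<in>UNIV. marg px q z * ln (marg px q z)) has_derivative
     (\<lambda>h. \<Sum>z\<in>UNIV. (ln (marg px p z) + 1) * marg px h z)) (at p)"
    using assms by (intro has_derivative_sum xlnx_deriv marg_deriv) auto
  have b: "((\<lambda>q. \<Sum>x\<in>UNIV. px x * (\<Sum>z\<in>UNIV. q $ (z, x) * ln (q $ (z, x)))) has_derivative
     (\<lambda>h. \<Sum>x\<in>UNIV. px x * (\<Sum>z\<in>UNIV. (ln (p $ (z, x)) + 1) * h $ (z, x)))) (at p)"
    using assms by (intro has_derivative_sum has_derivative_mult_right xlnx_deriv vec_nth_deriv) auto
  show ?thesis unfolding entZ_def entZX_def Lf_def
    by (intro has_derivative_add has_derivative_mult_right has_derivative_minus a b)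
qed

lemma infimal_ge: assumes "infimal e p" shows "e \<le> p $ i"
proof -
  have "Min (range (\<lambda>i. p $ i)) \<le> p $ i" by (rule Min_le) auto
  thus ?thesis using assms unfolding infimal_def by simp
qed

lemma marg_ge:
  assumes "\<forall>x. px x > 0" "(\<Sum>x\<in>UNIV. px x) = 1" "\<forall>i. e \<le> p $ i"
  shows "e \<le> marg px p z"
proof -
  have "(\<Sum>x\<in>UNIV. e * px x) \<le> (\<Sum>x\<in>UNIV. p $ (z, x) * px x)"
    using assms by (intro sum_mono mult_right_mono) (auto intro: less_imp_le)
  moreover have "(\<Sum>x\<in>UNIV. e * px x) = e" using assms(2) by (simp add: sum_distrib_left[symmetric])
  ultimately show ?thesis by (simp add: marg_def)
qed

lemma px_le1:
  fixes px :: "'x::finite \<Rightarrow> real"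
  assumes "\<forall>x. px x > 0" "(\<Sum>x\<in>UNIV. px x) = 1"
  shows "px x \<le> 1"
proof -
  have "px x \<le> (\<Sum>x\<in>UNIV. px x)" using assms by (intro member_le_sum) (auto intro: less_imp_le)
  thus ?thesis using assms by simp
qed

lemma E1: "entZX px q - entZX px p + (\<Sum>x\<in>UNIV. px x * (\<Sum>z\<in>UNIV. (ln (p $ (z, x)) + 1) * (q - p) $ (z, x)))
   = - (\<Sum>x\<in>UNIV. px x * (\<Sum>z\<in>UNIV. Breg (p $ (z, x)) (q $ (z, x))))"
proof -
  have r: "(\<Sum>z\<in>UNIV. Breg (p $ (z, x)) (q $ (z, x))) = (\<Sum>z\<in>UNIV. q $ (z, x) * ln (q $ (z, x)))
     - (\<Sum>z\<in>UNIV. p $ (z, x) * ln (p $ (z, x))) - (\<Sum>z\<in>UNIV. (ln (p $ (z, x)) + 1) * (q - p) $ (z, x))" for x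
    by (simp add: Breg_def sum_subtractf)
  have "- (\<Sum>x\<in>UNIV. px x * (\<Sum>z\<in>UNIV. Breg (p $ (z, x)) (q $ (z, x))))
    = - (\<Sum>x\<in>UNIV. px x * (\<Sum>z\<in>UNIV. q $ (z, x) * ln (q $ (z, x)))
       - px x * (\<Sum>z\<in>UNIV. p $ (z, x) * ln (p $ (z, x))) - px x * (\<Sum>z\<in>UNIV. (ln (p $ (z, x)) + 1) * (q - p) $ (z, x)))"
    by (simp only: r right_diff_distrib)
  also have "\<dots> = - (\<Sum>x\<in>UNIV. px x * (\<Sum>z\<in>UNIV. q $ (z, x) * ln (q $ (z, x))))
     + (\<Sum>x\<in>UNIV. px x * (\<Sum>z\<in>UNIV. p $ (z, x) * ln (p $ (z, x))))
     + (\<Sum>x\<in>UNIV. px x * (\<Sum>z\<in>UNIV. (ln (p $ (z, x)) + 1) * (q - p) $ (z, x)))"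
    by (simp only: sum_subtractf)
  finally show ?thesis unfolding entZX_def by simp
qed

lemma E2: "entZ px q - entZ px p + (\<Sum>z\<in>UNIV. (ln (marg px p z) + 1) * marg px (q - p) z)
   = - (\<Sum>z\<in>UNIV. Breg (marg px p z) (marg px q z))"
  unfolding entZ_def Breg_def marg_diff
  by (simp add: sum_subtractf sum.distrib[symmetric] algebra_simps)

lemma norm_sq: "(norm (d :: real ^ ('z::finite \<times> 'x::finite)))\<^sup>2 = (\<Sum>z\<in>UNIV. \<Sum>x\<in>UNIV. (d $ (z, x))\<^sup>2)"
  unfolding power2_norm_eq_inner inner_vec_def by (simp add: sum_pairs power2_eq_square)

lemma B1:
  fixes px :: "'x::finite \<Rightarrow> real" and p q :: "real ^ ('z::finite \<times> 'x)"
  assumes "\<forall>x. px x > 0" "(\<Sum>x\<in>UNIV. px x) = 1" "e > 0" "\<forall>i. e \<le> p $ i" "\<forall>i. e \<le> q $ i"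
  shows "(\<Sum>x\<in>UNIV. px x * (\<Sum>z\<in>UNIV. Breg (p $ (z, x)) (q $ (z, x))))
     \<le> (\<Sum>z\<in>UNIV. \<Sum>x\<in>UNIV. ((q - p) $ (z, x))\<^sup>2) / e"
proof -
  have each: "px x * (\<Sum>z\<in>UNIV. Breg (p $ (z, x)) (q $ (z, x))) \<le> (\<Sum>z\<in>UNIV. ((q - p) $ (z, x))\<^sup>2 / e)" for x
  proof -
    have 0: "0 \<le> (\<Sum>z\<in>UNIV. Breg (p $ (z, x)) (q $ (z, x)))"
      using assms by (intro sum_nonneg Breg_bounds(1)) auto
    have 1: "(\<Sum>z\<in>UNIV. Breg (p $ (z, x)) (q $ (z, x))) \<le> (\<Sum>z\<in>UNIV. ((q - p) $ (z, x))\<^sup>2 / e)"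
      using assms by (intro sum_mono) (simp add: Breg_bounds(2))
    have "px x * (\<Sum>z\<in>UNIV. Breg (p $ (z, x)) (q $ (z, x))) \<le> 1 * (\<Sum>z\<in>UNIV. Breg (p $ (z, x)) (q $ (z, x)))"
      using 0 px_le1[OF assms(1,2)] by (intro mult_right_mono) auto
    thus ?thesis using 1 by simp
  qed
  have "(\<Sum>x\<in>UNIV. px x * (\<Sum>z\<in>UNIV. Breg (p $ (z, x)) (q $ (z, x))))
      \<le> (\<Sum>x\<in>UNIV. \<Sum>z\<in>UNIV. ((q - p) $ (z, x))\<^sup>2 / e)"
    by (intro sum_mono each)
  also have "\<dots> = (\<Sum>z\<in>UNIV. \<Sum>x\<in>UNIV. ((q - p) $ (z, x))\<^sup>2 / e)" by (rule sum.swap)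
  also have "\<dots> = (\<Sum>z\<in>UNIV. \<Sum>x\<in>UNIV. ((q - p) $ (z, x))\<^sup>2) / e" by (simp add: sum_divide_distrib)
  finally show ?thesis .
qed

lemma B2:
  fixes px :: "'x::finite \<Rightarrow> real" and p q :: "real ^ ('z::finite \<times> 'x)"
  assumes "\<forall>x. px x > 0" "(\<Sum>x\<in>UNIV. px x) = 1" "e > 0" "\<forall>i. e \<le> p $ i" "\<forall>i. e \<le> q $ i"
  shows "0 \<le> (\<Sum>z\<in>UNIV. Breg (marg px p z) (marg px q z))"
    "(\<Sum>z\<in>UNIV. Breg (marg px p z) (marg px q z)) \<le> (\<Sum>z\<in>UNIV. \<Sum>x\<in>UNIV. ((q - p) $ (z, x))\<^sup>2) / e"
proof -
  have mp: "e \<le> marg px p z" and mq: "e \<le> marg px q z" for z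
    using marg_ge[OF assms(1,2)] assms(4,5) by auto
  show "0 \<le> (\<Sum>z\<in>UNIV. Breg (marg px p z) (marg px q z))"
    using mp mq assms(3) by (intro sum_nonneg Breg_bounds(1)) auto
  have each: "Breg (marg px p z) (marg px q z) \<le> (\<Sum>x\<in>UNIV. ((q - p) $ (z, x))\<^sup>2) / e" for z
  proof -
    have "Breg (marg px p z) (marg px q z) \<le> (marg px q z - marg px p z)\<^sup>2 / e"
      using mp mq assms(3) by (rule Breg_bounds(2))
    also have "marg px q z - marg px p z = (\<Sum>x\<in>UNIV. px x * (q - p) $ (z, x))"
      unfolding marg_def by (simp add: mult.commute sum_subtractf right_diff_distrib)
    also have "(\<Sum>x\<in>UNIV. px x * (q - p) $ (z, x))\<^sup>2 \<le> (\<Sum>x\<in>UNIV. px x * ((q - p) $ (z, x))\<^sup>2)"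
      using assms(1,2) by (intro weighted_sq) (auto intro: less_imp_le)
    also have "\<dots> \<le> (\<Sum>x\<in>UNIV. ((q - p) $ (z, x))\<^sup>2)"
    proof (intro sum_mono)
      fix x
      have "px x * ((q - p) $ (z, x))\<^sup>2 \<le> 1 * ((q - p) $ (z, x))\<^sup>2"
        using px_le1[OF assms(1,2)] by (intro mult_right_mono) auto
      thus "px x * ((q - p) $ (z, x))\<^sup>2 \<le> ((q - p) $ (z, x))\<^sup>2" by simp
    qed
    finally show ?thesis using assms(3) by (simp add: divide_right_mono)
  qed
  have "(\<Sum>z\<in>UNIV. Breg (marg px p z) (marg px q z)) \<le> (\<Sum>z\<in>UNIV. (\<Sum>x\<in>UNIV. ((q - p) $ (z, x))\<^sup>2) / e)"
    by (intro sum_mono each)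
  thus "(\<Sum>z\<in>UNIV. Breg (marg px p z) (marg px q z)) \<le> (\<Sum>z\<in>UNIV. \<Sum>x\<in>UNIV. ((q - p) $ (z, x))\<^sup>2) / e"
    by (simp add: sum_divide_distrib)
qed

lemma card1_eq:
  fixes p q :: "real ^ ('z::finite \<times> 'x::finite)"
  assumes "CARD('z) = 1" "cond_pmf p" "cond_pmf q"
  shows "q = p"
proof -
  obtain z0 :: 'z where U: "UNIV = {z0}" using assms(1) card_1_singletonE by blast
  have "q $ (z0, x) = 1" "p $ (z0, x) = 1" for x
    using assms(2,3) unfolding cond_pmf_def U by auto
  moreover have "z = z0" for z :: 'z using U by auto
  ultimately have "q $ (a, b) = p $ (a, b)" for a b by metis
  thus ?thesis by (simp add: vec_eq_iff)
qed

lemma fin_lemma: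
  fixes Fq Fp l c B r t s :: real
  assumes "Fq - Fp - l = c + - B" "- r \<le> c" "B \<le> t" "r + t \<le> s"
  shows "Fp + l - s \<le> Fq"
  using assms by linarith

lemma main_ineq:
  fixes px :: "'x::finite \<Rightarrow> real" and \<beta> \<epsilon> :: real and p q :: "real ^ ('z::finite \<times> 'x)"
  assumes px: "\<forall>x. px x > 0" "(\<Sum>x\<in>UNIV. px x) = 1" and e: "\<epsilon> > 0"
    and p: "infimal \<epsilon> p" and q: "infimal \<epsilon> q"
  shows "(\<beta> - 1) * entZ px q + entZX px q \<ge> (\<beta> - 1) * entZ px p + entZX px p + Lf \<beta> px p (q - p)
     - (max (2 * \<bar>\<beta> - 1\<bar> * real CARD('z) / \<epsilon>) (2 * real CARD('z) * real CARD('x) / \<epsilon>)) / 2 * (norm (q - p))\<^sup>2"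
proof -
  define \<sigma> where "\<sigma> = max (2 * \<bar>\<beta> - 1\<bar> * real CARD('z) / \<epsilon>) (2 * real CARD('z) * real CARD('x) / \<epsilon>)"
  have pe: "\<forall>i. \<epsilon> \<le> p $ i" and qe: "\<forall>i. \<epsilon> \<le> q $ i" using infimal_ge p q by auto
  define Sq where "Sq = (\<Sum>z\<in>UNIV. \<Sum>x\<in>UNIV. ((q - p) $ (z, x))\<^sup>2)"
  define A where "A = (\<Sum>z\<in>UNIV. Breg (marg px p z) (marg px q z))"
  define B where "B = (\<Sum>x\<in>UNIV. px x * (\<Sum>z\<in>UNIV. Breg (p $ (z, x)) (q $ (z, x))))"
  define C1 where "C1 = (\<Sum>x\<in>UNIV. px x * (\<Sum>z\<in>UNIV. (ln (p $ (z, x)) + 1) * (q - p) $ (z, x)))"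
  define C2 where "C2 = (\<Sum>z\<in>UNIV. (ln (marg px p z) + 1) * marg px (q - p) z)"
  have Sq0: "0 \<le> Sq" unfolding Sq_def by (intro sum_nonneg) auto
  have A0: "0 \<le> A" and A1: "A \<le> Sq / \<epsilon>" unfolding A_def Sq_def using B2[OF px e pe qe] by auto
  have B1': "B \<le> Sq / \<epsilon>" unfolding B_def Sq_def using B1[OF px e pe qe] by auto
  have "(\<beta> - 1) * entZ px q + entZX px q - ((\<beta> - 1) * entZ px p + entZX px p) - Lf \<beta> px p (q - p)
      = (\<beta> - 1) * (entZ px q - entZ px p + C2) + (entZX px q - entZX px p + C1)"
    unfolding Lf_def C1_def C2_def by (simp add: algebra_simps)
  also have "\<dots> = (\<beta> - 1) * (- A) + (- B)" unfolding A_def B_def C1_def C2_def E1 E2 ..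
  finally have eq: "(\<beta> - 1) * entZ px q + entZX px q - ((\<beta> - 1) * entZ px p + entZX px p) - Lf \<beta> px p (q - p)
      = (\<beta> - 1) * (- A) + (- B)" .
  have "\<bar>(\<beta> - 1) * A\<bar> \<le> \<bar>\<beta> - 1\<bar> * (Sq / \<epsilon>)"
    using A0 A1 unfolding abs_mult by (metis abs_ge_zero abs_of_nonneg mult_left_mono)
  hence c: "(\<beta> - 1) * (- A) \<ge> - (\<bar>\<beta> - 1\<bar> * (Sq / \<epsilon>))" by (simp add: abs_le_iff)
  have sig: "(\<bar>\<beta> - 1\<bar> + 1) * (Sq / \<epsilon>) \<le> \<sigma> / 2 * Sq"
  proof (cases "Sq = 0")
    case True thus ?thesis by simp
  next
    case False
    have "CARD('z) \<noteq> 1"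
    proof
      assume "CARD('z) = 1"
      hence "q = p" using card1_eq p q unfolding infimal_def by blast
      hence "Sq = 0" unfolding Sq_def by simp
      thus False using False by simp
    qed
    moreover have "0 < CARD('z)" by (rule finite_UNIV_card_ge_0) simp
    ultimately have "CARD('z) \<ge> 2" by linarith
    hence N: "real CARD('z) \<ge> 2" by simp
    have "0 < CARD('x)" by (rule finite_UNIV_card_ge_0) simp
    hence Nx: "real CARD('x) \<ge> 1" by simp
    have s1a: "2 * \<bar>\<beta> - 1\<bar> * real CARD('z) / \<epsilon> \<le> \<sigma>" unfolding \<sigma>_def by (rule max.cobounded1)
    have s2a: "2 * real CARD('z) * real CARD('x) / \<epsilon> \<le> \<sigma>" unfolding \<sigma>_def by (rule max.cobounded2)
    have s1: "\<sigma> / 2 \<ge> \<bar>\<beta> - 1\<bar> * real CARD('z) / \<epsilon>"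
    proof -
      have "(2 * \<bar>\<beta> - 1\<bar> * real CARD('z) / \<epsilon>) / 2 = \<bar>\<beta> - 1\<bar> * real CARD('z) / \<epsilon>" by simp
      thus ?thesis using s1a by linarith
    qed
    have s2: "\<sigma> / 2 \<ge> real CARD('z) * real CARD('x) / \<epsilon>"
    proof -
      have "(2 * real CARD('z) * real CARD('x) / \<epsilon>) / 2 = real CARD('z) * real CARD('x) / \<epsilon>" by simp
      thus ?thesis using s2a by linarith
    qed
    have t1: "\<bar>\<beta> - 1\<bar> * real CARD('z) \<ge> 2 * \<bar>\<beta> - 1\<bar>" using mult_right_mono[OF N abs_ge_zero[of "\<beta> - 1"]] by (simp add: mult.commute)
    have t2: "real CARD('z) * real CARD('x) \<ge> 2" using N Nx
      by (metis mult_mono mult.right_neutral le_numeral_extra(1) order_trans zero_le_numeral)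
    have "(\<bar>\<beta> - 1\<bar> + 1) \<le> max (\<bar>\<beta> - 1\<bar> * real CARD('z)) (real CARD('z) * real CARD('x))"
    proof (cases "\<bar>\<beta> - 1\<bar> \<le> 1")
      case True
      hence "\<bar>\<beta> - 1\<bar> + 1 \<le> real CARD('z) * real CARD('x)" using t2 by linarith
      thus ?thesis by (simp add: le_max_iff_disj)
    next
      case False
      hence "\<bar>\<beta> - 1\<bar> + 1 \<le> \<bar>\<beta> - 1\<bar> * real CARD('z)"
        using t1 False by (smt (verit))
      thus ?thesis by (simp add: le_max_iff_disj)
    qed
    hence "(\<bar>\<beta> - 1\<bar> + 1) / \<epsilon> \<le> max (\<bar>\<beta> - 1\<bar> * real CARD('z)) (real CARD('z) * real CARD('x)) / \<epsilon>"
      using e by (intro divide_right_mono) auto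
    also have "\<dots> \<le> \<sigma> / 2"
      using s1 s2 by (cases "\<bar>\<beta> - 1\<bar> * real CARD('z) \<le> real CARD('z) * real CARD('x)") (simp_all add: max_def)
    finally have "(\<bar>\<beta> - 1\<bar> + 1) / \<epsilon> \<le> \<sigma> / 2" .
    hence "(\<bar>\<beta> - 1\<bar> + 1) / \<epsilon> * Sq \<le> \<sigma> / 2 * Sq" using Sq0 by (rule mult_right_mono)
    thus ?thesis by simp
  qed
  have "(norm (q - p))\<^sup>2 = Sq" unfolding Sq_def by (rule norm_sq)
  moreover have "(\<bar>\<beta> - 1\<bar> + 1) * (Sq / \<epsilon>) = \<bar>\<beta> - 1\<bar> * (Sq / \<epsilon>) + Sq / \<epsilon>"
    by (simp add: algebra_simps)
  ultimately have n: "(norm (q - p))\<^sup>2 = Sq" and s3: "\<bar>\<beta> - 1\<bar> * (Sq / \<epsilon>) + Sq / \<epsilon> \<le> \<sigma> / 2 * Sq"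
    using sig by auto
  have "(\<beta> - 1) * entZ px p + entZX px p + Lf \<beta> px p (q - p) - \<sigma> / 2 * Sq \<le> (\<beta> - 1) * entZ px q + entZX px q"
    by (rule fin_lemma[OF eq c B1' s3])
  thus ?thesis unfolding n \<sigma>_def .
qed

theorem mainTheorem7:
  fixes px :: "'x::finite \<Rightarrow> real" and \<beta> \<epsilon> :: real
  assumes "\<forall>x. px x > 0"
    and "(\<Sum>x\<in>UNIV. px x) = 1"
    and "\<epsilon> > 0"
  shows "weakly_convex_on {q :: real ^ ('z::finite \<times> 'x). infimal \<epsilon> q}
           (\<lambda>q. (\<beta> - 1) * entZ px q + entZX px q)
           (max (2 * \<bar>\<beta> - 1\<bar> * real CARD('z) / \<epsilon>)
                (2 * real CARD('z) * real CARD('x) / \<epsilon>))"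
  unfolding weakly_convex_on_def gderiv_def
proof (intro ballI)
  fix p :: "real ^ ('z \<times> 'x)"
  assume "p \<in> {q. infimal \<epsilon> q}"
  hence p: "infimal \<epsilon> p" by simp
  have pe: "\<forall>i. \<epsilon> \<le> p $ i" using infimal_ge p by auto
  have pos: "\<forall>i. p $ i > 0" using pe assms(3) by (meson less_le_trans)
  have mpos: "\<forall>z. marg px p z > 0" using marg_ge[OF assms(1,2) pe] assms(3) by (meson less_le_trans)
  have L: "(\<lambda>h. inner h (Dv \<beta> px p)) = Lf \<beta> px p" by (rule ext) (simp add: inner_Dv)
  have d: "((\<lambda>q. (\<beta> - 1) * entZ px q + entZX px q) has_derivative (\<lambda>h. inner h (Dv \<beta> px p))) (at p)"
    unfolding L by (rule f_deriv[OF pos mpos])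
  have i: "(\<beta> - 1) * entZ px p + entZX px p + inner (Dv \<beta> px p) (y - p) - max (2 * \<bar>\<beta> - 1\<bar> * real CARD('z) / \<epsilon>)
              (2 * real CARD('z) * real CARD('x) / \<epsilon>) / 2 * (norm (y - p))\<^sup>2 \<le> (\<beta> - 1) * entZ px y + entZX px y"
    if "y \<in> {q. infimal \<epsilon> q}" for y :: "real ^ ('z \<times> 'x)"
  proof -
    have y: "infimal \<epsilon> y" using that by simp
    have "inner (Dv \<beta> px p) (y - p) = Lf \<beta> px p (y - p)" by (simp add: inner_commute inner_Dv)
    thus ?thesis using main_ineq[OF assms p y, of \<beta>] by simp
  qed
  from d i show "\<exists>D. ((\<lambda>q. (\<beta> - 1) * entZ px q + entZX px q) has_derivative (\<lambda>h. inner h D)) (at p) \<and>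
      (\<forall>y\<in>{q. infimal \<epsilon> q}. (\<beta> - 1) * entZ px p + entZX px p + inner D (y - p) - max (2 * \<bar>\<beta> - 1\<bar> * real CARD('z) / \<epsilon>)
              (2 * real CARD('z) * real CARD('x) / \<epsilon>) / 2 * (norm (y - p))\<^sup>2 \<le> (\<beta> - 1) * entZ px y + entZX px y)"
    by blast
qed

end
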